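(* Let $\mathcal{D}=(\mathcal{P},\mathcal{B},\mathcal{I})$ be a $(v,b,r,k,\lambda_1,0)$ SPBIBD of type $(k-1,t)$ with $0<t<k$, and let $\Gamma$ be its incidence graph. Then every vertex $p\in\mathcal{P}$ has eccentricity $4$ in $\Gamma$.
   Context: A design $\mathcal{D}=(\mathcal{P},\mathcal{B},\mathcal{I})$ is an incidence structure with $|\mathcal{P}|=v$, $|\mathcal{B}|=b$, every block incident with exactly $k$ points and every point with exactly $r$ blocks; standing assumptions: $v>k$ and $r<b$. $(p,B)$ is a flag if $p\in B$, a non-flag otherwise. $\mathcal{D}$ is a $(v,b,r,k,\lambda_1,\lambda_2)$ SPBIBD of type $(s,t)$ if (i) any two distinct points are together in exactly $\lambda_1$ or exactly $\lambda_2$ blocks; (ii) for every flag $(p,B)$, the number of points of $B$ other than $p$ lying with $p$ in exactly $\lambda_1$ blocks is $s$; (iii) for every non-flag $(p,B)$, the number of points of $B$ lying with $p$ in exactly $\lambda_1$ blocks is $t$. The incidence graph is the bipartite graph on $\mathcal{P}\cup\mathcal{B}$ with $p\sim B$ iff $p\in B$. The eccentricity of a vertex $u$ is $\max_w\partial(u,w)$, where $\partial$ is graph distance. *)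

theory Defs
  imports Main "HOL-Library.Extended_Nat"
begin

text \<open>A design: point set P, block set Bl (blocks are abstract objects, so repeated
blocks are allowed), incidence relation I.\<close>

definition design :: "'a set \<Rightarrow> 'b set \<Rightarrow> ('a \<Rightarrow> 'b \<Rightarrow> bool)
    \<Rightarrow> nat \<Rightarrow> nat \<Rightarrow> nat \<Rightarrow> nat \<Rightarrow> bool" where
  "design P Bl I v b r k \<longleftrightarrow>
     finite P \<and> finite Bl \<and> card P = v \<and> card Bl = b \<and>
     (\<forall>B\<in>Bl. card {p\<in>P. I p B} = k) \<and>
     (\<forall>p\<in>P. card {B\<in>Bl. I p B} = r) \<and>
     v > k \<and> r < b"

definition pair_count :: "'a set \<Rightarrow> 'b set \<Rightarrow> ('a \<Rightarrow> 'b \<Rightarrow> bool) \<Rightarrow> 'a \<Rightarrow> 'a \<Rightarrow> nat" where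
  "pair_count P Bl I p q = card {B\<in>Bl. I p B \<and> I q B}"

definition spbibd :: "'a set \<Rightarrow> 'b set \<Rightarrow> ('a \<Rightarrow> 'b \<Rightarrow> bool)
    \<Rightarrow> nat \<Rightarrow> nat \<Rightarrow> nat \<Rightarrow> nat \<Rightarrow> nat \<Rightarrow> nat \<Rightarrow> nat \<Rightarrow> nat \<Rightarrow> bool" where
  "spbibd P Bl I v b r k lam1 lam2 s t \<longleftrightarrow>
     design P Bl I v b r k \<and>
     (\<forall>p\<in>P. \<forall>q\<in>P. p \<noteq> q \<longrightarrow>
        pair_count P Bl I p q = lam1 \<or> pair_count P Bl I p q = lam2) \<and>
     (\<forall>p\<in>P. \<forall>B\<in>Bl. I p B \<longrightarrow>
        card {q\<in>P. q \<noteq> p \<and> I q B \<and> pair_count P Bl I p q = lam1} = s) \<and>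
     (\<forall>p\<in>P. \<forall>B\<in>Bl. \<not> I p B \<longrightarrow>
        card {q\<in>P. I q B \<and> pair_count P Bl I p q = lam1} = t)"

fun inc_adj :: "'a set \<Rightarrow> 'b set \<Rightarrow> ('a \<Rightarrow> 'b \<Rightarrow> bool) \<Rightarrow> 'a + 'b \<Rightarrow> 'a + 'b \<Rightarrow> bool" where
  "inc_adj P Bl I (Inl p) (Inr B) = (p \<in> P \<and> B \<in> Bl \<and> I p B)"
| "inc_adj P Bl I (Inr B) (Inl p) = (p \<in> P \<and> B \<in> Bl \<and> I p B)"
| "inc_adj P Bl I _ _ = False"

definition inc_vertices :: "'a set \<Rightarrow> 'b set \<Rightarrow> ('a + 'b) set" where
  "inc_vertices P Bl = Inl ` P \<union> Inr ` Bl"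

text \<open>Graph distance: length of a shortest walk (\<infinity> if none).\<close>
definition inc_dist :: "'a set \<Rightarrow> 'b set \<Rightarrow> ('a \<Rightarrow> 'b \<Rightarrow> bool) \<Rightarrow> 'a + 'b \<Rightarrow> 'a + 'b \<Rightarrow> enat" where
  "inc_dist P Bl I u w = (INF n \<in> {n. (inc_adj P Bl I ^^ n) u w}. enat n)"

definition inc_ecc :: "'a set \<Rightarrow> 'b set \<Rightarrow> ('a \<Rightarrow> 'b \<Rightarrow> bool) \<Rightarrow> 'a + 'b \<Rightarrow> enat" where
  "inc_ecc P Bl I u = (SUP w \<in> inc_vertices P Bl. inc_dist P Bl I u w)"

end

theory Submission
  imports Defs
begin

lemma reach_le:
  assumes "(inc_adj P Bl I ^^ n) u w"
  shows "inc_dist P Bl I u w \<le> enat n"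
  unfolding inc_dist_def by (rule INF_lower) (use assms in simp)

lemma adj_side: "inc_adj P Bl I y w \<Longrightarrow> (\<exists>x. y = Inl x) \<longleftrightarrow> \<not>(\<exists>x. w = Inl x)"
  by (cases y; cases w) auto

lemma parity: "(inc_adj P Bl I ^^ n) (Inl p) w \<Longrightarrow> (even n \<longleftrightarrow> (\<exists>x. w = Inl x))"
proof (induction n arbitrary: w)
  case 0
  then show ?case by auto
next
  case (Suc n)
  then obtain y where y: "(inc_adj P Bl I ^^ n) (Inl p) y" "inc_adj P Bl I y w" by auto
  from Suc.IH[OF y(1)] adj_side[OF y(2)] show ?case by simp
qed

lemma ne_ex: "card {x\<in>A. Q x} \<noteq> 0 \<Longrightarrow> \<exists>x\<in>A. Q x"
proof -
  assume c: "card {x\<in>A. Q x} \<noteq> 0"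
  show ?thesis
  proof (rule ccontr)
    assume "\<not> ?thesis"
    then have "{x\<in>A. Q x} = {}" by auto
    with c show False by simp
  qed
qed

lemma two_step:
  assumes "(inc_adj P Bl I ^^ 2) (Inl p) (Inl q)"
  shows "\<exists>B\<in>Bl. I p B \<and> I q B"
proof -
  from assms obtain y where y: "inc_adj P Bl I (Inl p) y" "inc_adj P Bl I y (Inl q)"
    by (auto simp: numeral_2_eq_2 relpowp_Suc_left)
  then show ?thesis by (cases y) auto
qed

theorem lemma4p1:
  fixes P :: "'a set" and Bl :: "'b set" and I :: "'a \<Rightarrow> 'b \<Rightarrow> bool"
    and v b r k lam1 t :: nat
  assumes "spbibd P Bl I v b r k lam1 0 (k - 1) t"
    and "0 < t" and "t < k"
    and "p \<in> P"
  shows "inc_ecc P Bl I (Inl p) = 4"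
proof -
  let ?A = "inc_adj P Bl I"
  let ?pc = "pair_count P Bl I"
  have fP: "finite P" and fB: "finite Bl" and cP: "card P = v" and cB: "card Bl = b"
    and kk: "\<And>B. B\<in>Bl \<Longrightarrow> card {p\<in>P. I p B} = k"
    and rr: "\<And>p. p\<in>P \<Longrightarrow> card {B\<in>Bl. I p B} = r" and rb: "r < b"
    and two: "\<And>p q. p\<in>P \<Longrightarrow> q\<in>P \<Longrightarrow> p \<noteq> q \<Longrightarrow> ?pc p q = lam1 \<or> ?pc p q = 0"
    and fl: "\<And>p B. p\<in>P \<Longrightarrow> B\<in>Bl \<Longrightarrow> I p B \<Longrightarrow>
        card {q\<in>P. q \<noteq> p \<and> I q B \<and> ?pc p q = lam1} = k - 1"
    and nfl: "\<And>p B. p\<in>P \<Longrightarrow> B\<in>Bl \<Longrightarrow> \<not> I p B \<Longrightarrow>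
        card {q\<in>P. I q B \<and> ?pc p q = lam1} = t"
  proof -
    have S: "design P Bl I v b r k" and S2: "\<forall>p\<in>P. \<forall>q\<in>P. p \<noteq> q \<longrightarrow> ?pc p q = lam1 \<or> ?pc p q = 0"
      and S3: "\<forall>p\<in>P. \<forall>B\<in>Bl. I p B \<longrightarrow> card {q\<in>P. q \<noteq> p \<and> I q B \<and> ?pc p q = lam1} = k - 1"
      and S4: "\<forall>p\<in>P. \<forall>B\<in>Bl. \<not> I p B \<longrightarrow> card {q\<in>P. I q B \<and> ?pc p q = lam1} = t"
      using assms(1) unfolding spbibd_def by (fact conjunct1, fact conjunct1[OF conjunct2],
          fact conjunct1[OF conjunct2[OF conjunct2]], fact conjunct2[OF conjunct2[OF conjunct2]])
    from S have D1: "finite P" "finite Bl" "card P = v" "card Bl = b"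
      and D2: "\<forall>B\<in>Bl. card {p\<in>P. I p B} = k" and D3: "\<forall>p\<in>P. card {B\<in>Bl. I p B} = r"
      and D4: "r < b"
      unfolding design_def by (fact conjunct1 conjunct1[OF conjunct2]
          conjunct1[OF conjunct2[OF conjunct2]] conjunct1[OF conjunct2[OF conjunct2[OF conjunct2]]]
          conjunct1[OF conjunct2[OF conjunct2[OF conjunct2[OF conjunct2]]]]
          conjunct1[OF conjunct2[OF conjunct2[OF conjunct2[OF conjunct2[OF conjunct2]]]]]
          conjunct1[OF conjunct2[OF conjunct2[OF conjunct2[OF conjunct2[OF conjunct2[OF conjunct2]]]]]]
          conjunct2[OF conjunct2[OF conjunct2[OF conjunct2[OF conjunct2[OF conjunct2[OF conjunct2]]]]]])+
    show "finite P" "finite Bl" "card P = v" "card Bl = b" "r < b" by (fact D1 D4)+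
    show "\<And>B. B\<in>Bl \<Longrightarrow> card {p\<in>P. I p B} = k" using D2 by (rule bspec)
    show "\<And>p. p\<in>P \<Longrightarrow> card {B\<in>Bl. I p B} = r" using D3 by (rule bspec)
    show "\<And>p q. p\<in>P \<Longrightarrow> q\<in>P \<Longrightarrow> p \<noteq> q \<Longrightarrow> ?pc p q = lam1 \<or> ?pc p q = 0"
      by (rule S2[rule_format])
    show "\<And>p B. p\<in>P \<Longrightarrow> B\<in>Bl \<Longrightarrow> I p B \<Longrightarrow>
        card {q\<in>P. q \<noteq> p \<and> I q B \<and> ?pc p q = lam1} = k - 1" by (rule S3[rule_format])
    show "\<And>p B. p\<in>P \<Longrightarrow> B\<in>Bl \<Longrightarrow> \<not> I p B \<Longrightarrow>
        card {q\<in>P. I q B \<and> ?pc p q = lam1} = t" by (rule S4[rule_format])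
  qed
  have pc_pos: "?pc p q > 0 \<longleftrightarrow> (\<exists>B\<in>Bl. I p B \<and> I q B)" for p q
    unfolding pair_count_def using fB by (auto simp: card_gt_0_iff)
  from rb cB have "Bl \<noteq> {}" by auto
  then obtain B0 where B0: "B0 \<in> Bl" by auto
  have "card {p\<in>P. I p B0} \<noteq> 0" using kk[OF B0] assms(2,3) by simp
  then obtain p0 where p0: "p0 \<in> P" "I p0 B0" using ne_ex[of P "\<lambda>p. I p B0"] by blast
  have "card {q\<in>P. q \<noteq> p0 \<and> I q B0 \<and> ?pc p0 q = lam1} \<noteq> 0" using fl[OF p0(1) B0 p0(2)] assms(2,3) by simp
  then obtain q0 where q0: "I q0 B0" "?pc p0 q0 = lam1" using ne_ex[of P "\<lambda>q. q \<noteq> p0 \<and> I q B0 \<and> ?pc p0 q = lam1"] by blast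
  have lam1: "lam1 > 0" using q0 pc_pos[of p0 q0] B0 p0 by auto
  have r0: "r \<noteq> 0" using rr[OF p0(1)] B0 p0 fB card_gt_0_iff[of "{B\<in>Bl. I p0 B}"] by auto
  have inblock: "\<exists>B\<in>Bl. I q B" if "q \<in> P" for q
    using rr[OF that] r0 ne_ex[of Bl "\<lambda>B. I q B"] by auto
  have blk: "\<exists>n\<le>3. (?A ^^ n) (Inl p) (Inr B)" if B: "B \<in> Bl" for B
  proof (cases "I p B")
    case True
    have "(?A ^^ 0) (Inl p) (Inl p)" by simp
    then have "(?A ^^ Suc 0) (Inl p) (Inr B)" by (rule relpowp_Suc_I) (use True B assms(4) in simp)
    then show ?thesis by (intro exI[of _ "Suc 0"]) simp
  next
    case False
    have "card {q\<in>P. I q B \<and> ?pc p q = lam1} \<noteq> 0" using nfl[OF assms(4) B False] assms(2) by simp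
    then obtain q where q: "q \<in> P" "I q B" "?pc p q = lam1" using ne_ex[of P "\<lambda>q. I q B \<and> ?pc p q = lam1"] by blast
    then obtain B1 where B1: "B1 \<in> Bl" "I p B1" "I q B1" using pc_pos[of p q] lam1 by auto
    have "(?A ^^ 0) (Inl p) (Inl p)" by simp
    then have "(?A ^^ Suc 0) (Inl p) (Inr B1)" by (rule relpowp_Suc_I) (use B1 assms(4) in simp)
    then have "(?A ^^ Suc (Suc 0)) (Inl p) (Inl q)" by (rule relpowp_Suc_I) (use B1 q in simp)
    then have "(?A ^^ Suc (Suc (Suc 0))) (Inl p) (Inr B)" by (rule relpowp_Suc_I) (use B q in simp)
    then have "(?A ^^ 3) (Inl p) (Inr B)" by (simp add: numeral_3_eq_3)
    then show ?thesis by (intro exI[of _ 3]) simp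
  qed
  have upper: "inc_dist P Bl I (Inl p) w \<le> 4" if w: "w \<in> inc_vertices P Bl" for w
  proof -
    from w consider (pt) q where "w = Inl q" "q \<in> P" | (bl) B where "w = Inr B" "B \<in> Bl"
      unfolding inc_vertices_def by auto
    then show ?thesis
    proof cases
      case pt
      then obtain B where B: "B \<in> Bl" "I q B" using inblock by blast
      then obtain n where n: "n \<le> 3" "(?A ^^ n) (Inl p) (Inr B)" using blk by blast
      have "(?A ^^ Suc n) (Inl p) (Inl q)" using n B pt by (auto intro: relpowp_Suc_I)
      then have "inc_dist P Bl I (Inl p) w \<le> enat (Suc n)" using pt reach_le by metis
      also have "\<dots> \<le> 4" using n by (simp add: numeral_eq_enat)
      finally show ?thesis .
    next
      case bl
      then obtain n where n: "n \<le> 3" "(?A ^^ n) (Inl p) (Inr B)" using blk by blast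
      then have "inc_dist P Bl I (Inl p) w \<le> enat n" using bl reach_le by metis
      also have "\<dots> \<le> 4" using n by (simp add: numeral_eq_enat)
      finally show ?thesis .
    qed
  qed
  have "card {B\<in>Bl. I p B} < card Bl" using rr[OF assms(4)] rb cB by simp
  then obtain B where B: "B \<in> Bl" "\<not> I p B"
  proof -
    assume c: "card {B\<in>Bl. I p B} < card Bl"
    have "\<exists>B\<in>Bl. \<not> I p B"
    proof (rule ccontr)
      assume "\<not> ?thesis"
      then have "{B\<in>Bl. I p B} = Bl" by auto
      with c show False by simp
    qed
    then show "(\<And>B. B \<in> Bl \<Longrightarrow> \<not> I p B \<Longrightarrow> thesis) \<Longrightarrow> thesis" by blast
  qed
  have sub: "{q\<in>P. I q B \<and> ?pc p q = lam1} \<subseteq> {q\<in>P. I q B}" by auto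
  have "card {q\<in>P. I q B \<and> ?pc p q = lam1} < card {q\<in>P. I q B}"
    using nfl[OF assms(4) B] kk[OF B(1)] assms(3) by simp
  then obtain q where q: "q \<in> P" "I q B" "?pc p q \<noteq> lam1"
  proof -
    assume c: "card {q\<in>P. I q B \<and> ?pc p q = lam1} < card {q\<in>P. I q B}"
    have "\<exists>q\<in>P. I q B \<and> ?pc p q \<noteq> lam1"
    proof (rule ccontr)
      assume "\<not> ?thesis"
      then have "{q\<in>P. I q B \<and> ?pc p q = lam1} = {q\<in>P. I q B}" by auto
      with c show False by simp
    qed
    then show "(\<And>q. q \<in> P \<Longrightarrow> I q B \<Longrightarrow> ?pc p q \<noteq> lam1 \<Longrightarrow> thesis) \<Longrightarrow> thesis" by blast
  qed
  have qp: "q \<noteq> p" using q B by auto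
  have pc0: "?pc p q = 0" using two[OF assms(4) q(1) qp[symmetric]] q(3) by auto
  have far: "inc_dist P Bl I (Inl p) (Inl q) \<ge> 4"
    unfolding inc_dist_def
  proof (rule INF_greatest)
    fix n assume "n \<in> {n. (?A ^^ n) (Inl p) (Inl q)}"
    then have wk: "(?A ^^ n) (Inl p) (Inl q)" by simp
    have ev: "even n" using parity[OF wk] by auto
    have "n \<noteq> 0"
    proof
      assume "n = 0"
      with wk qp show False by simp
    qed
    moreover have "n \<noteq> 2" using two_step[of P Bl I p q] wk pc0 pc_pos[of p q] by auto
    ultimately have "n \<ge> 4" using ev by presburger
    then show "4 \<le> enat n" by (simp add: numeral_eq_enat)
  qed
  have qv: "Inl q \<in> inc_vertices P Bl" using q unfolding inc_vertices_def by auto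
  show ?thesis
    unfolding inc_ecc_def
  proof (rule antisym)
    show "(SUP w\<in>inc_vertices P Bl. inc_dist P Bl I (Inl p) w) \<le> 4"
      by (rule SUP_least) (rule upper)
    show "4 \<le> (SUP w\<in>inc_vertices P Bl. inc_dist P Bl I (Inl p) w)"
      using far qv by (meson SUP_upper2)
  qed
qed

end
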